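(* Let $G=(V,E)$ be a connected undirected $(D,c)$-uniform graph with $n=|V|$ vertices and $\delta$-mixing time $T(n)$ for $\delta=\frac{1}{(2cn)^2}$. For an edge set $S\subseteq E$ with $|S|=k$, the probability $P_{\ge 1}$ that a "good start" random walk of length $t$ traverses at least one edge of $S$ satisfies $P_{\geq 1} = \Omega\!\left(\frac{tk}{T(n)|E|}\right)$.
   Context: An undirected graph is $(D,c)$-uniform if every vertex has degree between $D$ and $cD$ (so $D$ is the minimum degree). A standard random walk moves at each step to a uniformly random neighbor; its stationary distribution is $\mu(v)=d_v/(2|E|)$. The $\delta$-mixing time is the smallest $t'$ such that for every starting vertex the distribution $\mu'$ after $t'$ steps satisfies $\|\mu-\mu'\|_\infty\le\delta$. A "good start" random walk of length $t$ starts at vertex $v$ with probability $d_v/(2|E|)$ and then performs $t$ steps of the standard random walk. Standing assumptions: $T(n)$ stays bounded as $n\to\infty$, $D$ grows with $n$, and $t=O(|E|/k)$. *)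

theory Defs
  imports Complex_Main
begin

definition ugraph :: "nat set \<Rightarrow> (nat \<Rightarrow> nat \<Rightarrow> bool) \<Rightarrow> bool" where
  "ugraph V adj \<longleftrightarrow> finite V \<and> V \<noteq> {} \<and>
     (\<forall>u v. adj u v \<longrightarrow> u \<in> V \<and> v \<in> V \<and> u \<noteq> v \<and> adj v u)"

definition edges :: "nat set \<Rightarrow> (nat \<Rightarrow> nat \<Rightarrow> bool) \<Rightarrow> nat set set" where
  "edges V adj = {{u, v} | u v. u \<in> V \<and> v \<in> V \<and> adj u v}"

definition connected_graph :: "nat set \<Rightarrow> (nat \<Rightarrow> nat \<Rightarrow> bool) \<Rightarrow> bool" where
  "connected_graph V adj \<longleftrightarrow> (\<forall>u\<in>V. \<forall>v\<in>V. adj\<^sup>*\<^sup>* u v)"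

definition degree :: "nat set \<Rightarrow> (nat \<Rightarrow> nat \<Rightarrow> bool) \<Rightarrow> nat \<Rightarrow> nat" where
  "degree V adj u = card {v \<in> V. adj u v}"

definition uniform_graph :: "nat set \<Rightarrow> (nat \<Rightarrow> nat \<Rightarrow> bool) \<Rightarrow> nat \<Rightarrow> real \<Rightarrow> bool" where
  "uniform_graph V adj D c \<longleftrightarrow>
     (\<forall>v\<in>V. D \<le> degree V adj v \<and> real (degree V adj v) \<le> c * real D)"

definition stat_dist :: "nat set \<Rightarrow> (nat \<Rightarrow> nat \<Rightarrow> bool) \<Rightarrow> nat \<Rightarrow> real" where
  "stat_dist V adj v = real (degree V adj v) / (2 * real (card (edges V adj)))"

definition trans_prob :: "nat set \<Rightarrow> (nat \<Rightarrow> nat \<Rightarrow> bool) \<Rightarrow> nat \<Rightarrow> nat \<Rightarrow> real" where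
  "trans_prob V adj u w = (if adj u w then 1 / real (degree V adj u) else 0)"

fun walk_dist :: "nat set \<Rightarrow> (nat \<Rightarrow> nat \<Rightarrow> bool) \<Rightarrow> nat \<Rightarrow> nat \<Rightarrow> nat \<Rightarrow> real" where
  "walk_dist V adj 0 v u = (if u = v then 1 else 0)"
| "walk_dist V adj (Suc t) v u = (\<Sum>w\<in>V. walk_dist V adj t v w * trans_prob V adj w u)"

definition mixed_at :: "nat set \<Rightarrow> (nat \<Rightarrow> nat \<Rightarrow> bool) \<Rightarrow> real \<Rightarrow> nat \<Rightarrow> bool" where
  "mixed_at V adj \<delta> t \<longleftrightarrow>
     (\<forall>v\<in>V. \<forall>u\<in>V. \<bar>stat_dist V adj u - walk_dist V adj t v u\<bar> \<le> \<delta>)"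

definition is_mixing_time :: "nat set \<Rightarrow> (nat \<Rightarrow> nat \<Rightarrow> bool) \<Rightarrow> real \<Rightarrow> nat \<Rightarrow> bool" where
  "is_mixing_time V adj \<delta> T \<longleftrightarrow> mixed_at V adj \<delta> T \<and> (\<forall>t<T. \<not> mixed_at V adj \<delta> t)"

text \<open>Vertex sequences of length t+1 (potential walks with t steps).\<close>
definition walks :: "nat set \<Rightarrow> nat \<Rightarrow> nat list set" where
  "walks V t = {xs. length xs = Suc t \<and> set xs \<subseteq> V}"

text \<open>Probability of the vertex sequence under a good-start walk.\<close>
definition walk_weight :: "nat set \<Rightarrow> (nat \<Rightarrow> nat \<Rightarrow> bool) \<Rightarrow> nat list \<Rightarrow> real" where
  "walk_weight V adj xs = stat_dist V adj (hd xs) *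
     (\<Prod>i<length xs - 1. trans_prob V adj (xs ! i) (xs ! Suc i))"

definition traverses :: "nat set set \<Rightarrow> nat list \<Rightarrow> bool" where
  "traverses S xs \<longleftrightarrow> (\<exists>i < length xs - 1. {xs ! i, xs ! Suc i} \<in> S)"

definition hit_prob :: "nat set \<Rightarrow> (nat \<Rightarrow> nat \<Rightarrow> bool) \<Rightarrow> nat \<Rightarrow> nat set set \<Rightarrow> real" where
  "hit_prob V adj t S = (\<Sum>xs\<in>{xs \<in> walks V t. traverses S xs}. walk_weight V adj xs)"

end

theory Submission
  imports Defs
begin

lemma finite_walks: "finite V \<Longrightarrow> finite (walks V t)"
  unfolding walks_def using finite_lists_length_eq[of V "Suc t"] by (simp add: conj_commute)

lemma walks_nonempty: "xs \<in> walks V t \<Longrightarrow> xs \<noteq> []"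
  unfolding walks_def by auto

lemma walks_last: "xs \<in> walks V t \<Longrightarrow> last xs \<in> V"
  using walks_nonempty[of xs V t] last_in_set[of xs] unfolding walks_def by auto

lemma walks_hd: "xs \<in> walks V t \<Longrightarrow> hd xs \<in> V"
  using walks_nonempty[of xs V t] hd_in_set[of xs] unfolding walks_def by auto

lemma walks_Suc: "walks V (Suc t) = (\<lambda>(ys,y). ys @ [y]) ` (walks V t \<times> V)"
proof
  show "walks V (Suc t) \<subseteq> (\<lambda>(ys,y). ys @ [y]) ` (walks V t \<times> V)"
  proof
    fix xs assume xs: "xs \<in> walks V (Suc t)"
    then have "xs \<noteq> []" by (auto simp: walks_def)
    then have "xs = butlast xs @ [last xs]" by simp
    moreover have "butlast xs \<in> walks V t" "last xs \<in> V" using xs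
      by (auto simp: walks_def dest: in_set_butlastD intro: walks_last)
    ultimately show "xs \<in> (\<lambda>(ys,y). ys @ [y]) ` (walks V t \<times> V)" by force
  qed
qed (auto simp: walks_def)

lemma walks_0: "walks V 0 = (\<lambda>x. [x]) ` V"
  unfolding walks_def by (auto simp: length_Suc_conv)

lemma sum_walks_Suc:
  "(\<Sum>xs\<in>walks V (Suc t). f xs) = (\<Sum>ys\<in>walks V t. \<Sum>y\<in>V. f (ys @ [y]))"
proof -
  have inj: "inj_on (\<lambda>(ys,y). ys @ [y]) (walks V t \<times> V)"
    by (auto simp: inj_on_def)
  have "(\<Sum>xs\<in>walks V (Suc t). f xs) = (\<Sum>(ys,y)\<in>walks V t \<times> V. f (ys @ [y]))"
    unfolding walks_Suc by (subst sum.reindex[OF inj]) (auto intro!: sum.cong)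
  also have "\<dots> = (\<Sum>ys\<in>walks V t. \<Sum>y\<in>V. f (ys @ [y]))"
    by (rule sum.cartesian_product[symmetric])
  finally show ?thesis .
qed

lemma sum_walks_0: "(\<Sum>xs\<in>walks V 0. f xs) = (\<Sum>x\<in>V. f [x])"
  unfolding walks_0 by (subst sum.reindex) (auto simp: inj_on_def)

lemma walk_weight_snoc:
  assumes "ys \<noteq> []"
  shows "walk_weight V adj (ys @ [y]) = walk_weight V adj ys * trans_prob V adj (last ys) y"
proof -
  obtain n where n: "length ys = Suc n" using assms by (cases ys) auto
  have "(\<Prod>i<length (ys@[y]) - 1. trans_prob V adj ((ys@[y]) ! i) ((ys@[y]) ! Suc i))
      = (\<Prod>i<Suc n. trans_prob V adj ((ys@[y]) ! i) ((ys@[y]) ! Suc i))" using n by simp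
  also have "\<dots> = (\<Prod>i<n. trans_prob V adj ((ys@[y]) ! i) ((ys@[y]) ! Suc i)) *
       trans_prob V adj ((ys@[y]) ! n) ((ys@[y]) ! Suc n)" by simp
  also have "(\<Prod>i<n. trans_prob V adj ((ys@[y]) ! i) ((ys@[y]) ! Suc i))
     = (\<Prod>i<length ys - 1. trans_prob V adj (ys ! i) (ys ! Suc i))"
    using n by (auto simp: nth_append intro!: prod.cong)
  also have "(ys@[y]) ! n = last ys" using n assms by (simp add: nth_append last_conv_nth)
  also have "(ys@[y]) ! Suc n = y" using n by (simp add: nth_append)
  finally show ?thesis using assms unfolding walk_weight_def by simp
qed

locale wg =
  fixes V :: "nat set" and adj :: "nat \<Rightarrow> nat \<Rightarrow> bool"
  assumes fin: "finite V"
    and adjV: "\<And>u v. adj u v \<Longrightarrow> u \<in> V \<and> v \<in> V \<and> u \<noteq> v \<and> adj v u"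
    and degpos: "\<And>v. v \<in> V \<Longrightarrow> degree V adj v > 0"
begin

abbreviation "P \<equiv> trans_prob V adj"
abbreviation "\<mu> \<equiv> stat_dist V adj"
abbreviation "w \<equiv> walk_weight V adj"
abbreviation "wd \<equiv> walk_dist V adj"

lemma P_nonneg: "P u v \<ge> 0"
  unfolding trans_prob_def by auto

lemma mu_nonneg: "\<mu> u \<ge> 0"
  unfolding stat_dist_def by auto

lemma row: assumes "u \<in> V" shows "(\<Sum>y\<in>V. P u y) = 1"
proof -
  have "(\<Sum>y\<in>V. P u y) = (\<Sum>y\<in>{y\<in>V. adj u y}. 1 / real (degree V adj u))"
    unfolding trans_prob_def by (rule sum.inter_filter[OF fin, symmetric])
  also have "\<dots> = 1" using degpos[OF assms] by (simp add: degree_def)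
  finally show ?thesis .
qed

lemma P_out: "v \<notin> V \<Longrightarrow> P u v = 0"
  unfolding trans_prob_def using adjV by auto

lemma stat: assumes "u \<in> V" shows "(\<Sum>x\<in>V. \<mu> x * P x u) = \<mu> u"
proof -
  have "(\<Sum>x\<in>V. \<mu> x * P x u) = (\<Sum>x\<in>V. if adj x u then 1 / (2 * real (card (edges V adj))) else 0)"
    unfolding trans_prob_def stat_dist_def using degpos adjV by (intro sum.cong) force+
  also have "\<dots> = (\<Sum>x\<in>{x\<in>V. adj x u}. 1 / (2 * real (card (edges V adj))))"
    by (rule sum.inter_filter[OF fin, symmetric])
  also have "{x\<in>V. adj x u} = {x\<in>V. adj u x}" using adjV by blast
  finally show ?thesis unfolding stat_dist_def degree_def by simp
qed

lemma wd_nonneg: "wd s v u \<ge> 0"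
  by (induction s arbitrary: u) (auto intro!: sum_nonneg mult_nonneg_nonneg P_nonneg)

lemma wd_front: assumes "v \<in> V" shows "wd (Suc s) v u = (\<Sum>x\<in>V. P v x * wd s x u)"
proof (induction s arbitrary: u)
  case 0
  have "wd (Suc 0) v u = (\<Sum>x\<in>V. if x = v then P x u else 0)" unfolding walk_dist.simps by (intro sum.cong) auto
  also have "\<dots> = P v u" using fin assms by simp
  also have "\<dots> = (\<Sum>x\<in>V. if x = u then P v x else 0)" using fin P_out[of u v] by simp
  also have "\<dots> = (\<Sum>x\<in>V. P v x * wd 0 x u)" by (intro sum.cong) auto
  finally show ?case .
next
  case (Suc s)
  have "wd (Suc (Suc s)) v u = (\<Sum>y\<in>V. (\<Sum>x\<in>V. P v x * wd s x y) * P y u)"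
    by (simp only: walk_dist.simps(2)[of _ _ "Suc s"] Suc)
  also have "\<dots> = (\<Sum>x\<in>V. P v x * (\<Sum>y\<in>V. wd s x y * P y u))"
    by (simp add: sum_distrib_left sum_distrib_right mult.assoc) (rule sum.swap)
  also have "\<dots> = (\<Sum>x\<in>V. P v x * wd (Suc s) x u)" by simp
  finally show ?case .
qed

lemma wd_stat: assumes "u \<in> V" shows "(\<Sum>x\<in>V. \<mu> x * wd s x u) = \<mu> u"
  using assms
proof (induction s arbitrary: u)
  case 0
  then show ?case using fin by (simp add: if_distrib cong: if_cong)
next
  case (Suc s)
  have "(\<Sum>x\<in>V. \<mu> x * wd (Suc s) x u) = (\<Sum>y\<in>V. (\<Sum>x\<in>V. \<mu> x * wd s x y) * P y u)"
    by (simp add: sum_distrib_left sum_distrib_right mult.assoc) (rule sum.swap)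
  also have "\<dots> = (\<Sum>y\<in>V. \<mu> y * P y u)" using Suc.IH by simp
  also have "\<dots> = \<mu> u" using stat[OF Suc.prems] .
  finally show ?case .
qed

lemma wd_upper:
  assumes "\<And>v. v \<in> V \<Longrightarrow> wd T v u \<le> b" "T \<le> s" "v \<in> V"
  shows "wd s v u \<le> b"
  using assms(2,3)
proof (induction s arbitrary: v)
  case 0 then show ?case using assms(1) by simp
next
  case (Suc s)
  show ?case
  proof (cases "T = Suc s")
    case True then show ?thesis using assms(1) Suc.prems by simp
  next
    case False
    then have "T \<le> s" using Suc.prems by simp
    have "wd (Suc s) v u = (\<Sum>x\<in>V. P v x * wd s x u)" using wd_front[OF Suc.prems(2)] .
    also have "\<dots> \<le> (\<Sum>x\<in>V. P v x * b)"
      by (intro sum_mono mult_left_mono Suc.IH P_nonneg \<open>T \<le> s\<close>)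
    also have "\<dots> = b" using row[OF Suc.prems(2)] by (simp add: sum_distrib_right[symmetric])
    finally show ?thesis .
  qed
qed

lemma w_nonneg: "w xs \<ge> 0"
  unfolding walk_weight_def by (intro mult_nonneg_nonneg mu_nonneg prod_nonneg) (auto intro: P_nonneg)

lemma group:
  "(\<Sum>ys\<in>walks V t. F ys) = (\<Sum>x\<in>V. \<Sum>ys\<in>walks V t. if last ys = x then F ys else 0)"
proof -
  have "(\<Sum>x\<in>V. \<Sum>ys\<in>walks V t. if last ys = x then F ys else 0)
     = (\<Sum>ys\<in>walks V t. \<Sum>x\<in>V. if last ys = x then F ys else 0)" by (rule sum.swap)
  also have "\<dots> = (\<Sum>ys\<in>walks V t. F ys)"
    using fin walks_last by (intro sum.cong) (auto simp: sum.delta')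
  finally show ?thesis by simp
qed

lemma prefix:
  "(\<Sum>xs\<in>walks V (m+s). w xs * g (take (Suc m) xs)) = (\<Sum>ys\<in>walks V m. w ys * g ys)"
proof (induction s)
  case 0
  show ?case by (intro sum.cong) (auto simp: walks_def)
next
  case (Suc s)
  have "(\<Sum>xs\<in>walks V (m+Suc s). w xs * g (take (Suc m) xs))
     = (\<Sum>ys\<in>walks V (m+s). \<Sum>y\<in>V. w ys * P (last ys) y * g (take (Suc m) ys))"
    by (simp only: add_Suc_right sum_walks_Suc)
       (intro sum.cong refl, auto simp: walk_weight_snoc walks_nonempty walks_def)
  also have "\<dots> = (\<Sum>ys\<in>walks V (m+s). w ys * g (take (Suc m) ys) * (\<Sum>y\<in>V. P (last ys) y))"
    by (simp add: sum_distrib_left mult_ac)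
  also have "\<dots> = (\<Sum>ys\<in>walks V (m+s). w ys * g (take (Suc m) ys))"
    using row walks_last by (intro sum.cong) auto
  finally show ?case using Suc.IH by simp
qed


lemma markov:
  assumes "u \<in> V"
  shows "(\<Sum>xs\<in>walks V (m+s). w xs * g (take (Suc m) xs) * (if last xs = u then 1 else 0))
       = (\<Sum>ys\<in>walks V m. w ys * g ys * wd s (last ys) u)"
  using assms
proof (induction s arbitrary: u)
  case 0
  show ?case by (intro sum.cong) (auto simp: walks_def)
next
  case (Suc s)
  have "(\<Sum>xs\<in>walks V (m+Suc s). w xs * g (take (Suc m) xs) * (if last xs = u then 1 else 0))
     = (\<Sum>zs\<in>walks V (m+s). \<Sum>y\<in>V. if y = u then w zs * g (take (Suc m) zs) * P (last zs) y else 0)"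
    by (simp only: add_Suc_right sum_walks_Suc)
       (intro sum.cong refl, auto simp: walk_weight_snoc walks_nonempty walks_def)
  also have "\<dots> = (\<Sum>zs\<in>walks V (m+s). w zs * g (take (Suc m) zs) * P (last zs) u)"
    using fin Suc.prems by simp
  also have "\<dots> = (\<Sum>x\<in>V. \<Sum>zs\<in>walks V (m+s). if last zs = x then w zs * g (take (Suc m) zs) * P (last zs) u else 0)"
    by (rule group)
  also have "\<dots> = (\<Sum>x\<in>V. P x u * (\<Sum>zs\<in>walks V (m+s). w zs * g (take (Suc m) zs) * (if last zs = x then 1 else 0)))"
    by (simp add: sum_distrib_left if_distrib mult_ac cong: if_cong)
  also have "\<dots> = (\<Sum>x\<in>V. P x u * (\<Sum>ys\<in>walks V m. w ys * g ys * wd s (last ys) x))"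
    using Suc.IH by simp
  also have "\<dots> = (\<Sum>ys\<in>walks V m. w ys * g ys * (\<Sum>x\<in>V. wd s (last ys) x * P x u))"
    by (simp add: sum_distrib_left mult_ac) (rule sum.swap)
  finally show ?case by simp
qed

definition phi :: "nat set set \<Rightarrow> nat \<Rightarrow> real" where
  "phi S x = (\<Sum>y\<in>V. P x y * (if {x,y} \<in> S then 1 else 0))"

lemma laststep:
  "(\<Sum>xs\<in>walks V (Suc j). w xs * h (take (Suc j) xs) * (if {xs!j, xs!Suc j} \<in> S then 1 else 0))
   = (\<Sum>ys\<in>walks V j. w ys * h ys * phi S (last ys))"
proof -
  have "(\<Sum>xs\<in>walks V (Suc j). w xs * h (take (Suc j) xs) * (if {xs!j, xs!Suc j} \<in> S then 1 else 0))
    = (\<Sum>ys\<in>walks V j. \<Sum>y\<in>V. w ys * h ys * (P (last ys) y * (if {last ys, y} \<in> S then 1 else 0)))"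
    unfolding sum_walks_Suc
  proof (intro sum.cong refl)
    fix ys y assume ys: "ys \<in> walks V j"
    then have l: "length ys = Suc j" "ys \<noteq> []" by (auto simp: walks_def)
    then have "(ys @ [y]) ! j = last ys" by (simp add: nth_append last_conv_nth)
    moreover have "(ys @ [y]) ! Suc j = y" using l by (simp add: nth_append)
    moreover have "take (Suc j) (ys @ [y]) = ys" using l by simp
    ultimately show "w (ys @ [y]) * h (take (Suc j) (ys @ [y])) * (if {(ys @ [y]) ! j, (ys @ [y]) ! Suc j} \<in> S then 1 else 0)
      = w ys * h ys * (P (last ys) y * (if {last ys, y} \<in> S then 1 else 0))"
      using l by (simp add: walk_weight_snoc)
  qed
  also have "\<dots> = (\<Sum>ys\<in>walks V j. w ys * h ys * phi S (last ys))"
    unfolding phi_def by (simp add: sum_distrib_left)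
  finally show ?thesis .
qed


lemma phi_nonneg: "phi S x \<ge> 0"
  unfolding phi_def by (intro sum_nonneg mult_nonneg_nonneg P_nonneg) auto

lemma lastdist: assumes "x \<in> V"
  shows "(\<Sum>ys\<in>walks V i. w ys * (if last ys = x then 1 else 0)) = \<mu> x"
proof -
  have "(\<Sum>ys\<in>walks V (0+i). w ys * (\<lambda>_. 1) (take (Suc 0) ys) * (if last ys = x then 1 else 0))
     = (\<Sum>ys\<in>walks V 0. w ys * 1 * wd i (last ys) x)" by (rule markov[OF assms])
  also have "\<dots> = (\<Sum>v\<in>V. \<mu> v * wd i v x)"
    unfolding sum_walks_0 by (simp add: walk_weight_def)
  also have "\<dots> = \<mu> x" by (rule wd_stat[OF assms])
  finally show ?thesis by simp
qed

lemma sumlast: "(\<Sum>ys\<in>walks V i. w ys * f (last ys)) = (\<Sum>x\<in>V. f x * \<mu> x)"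
proof -
  have "(\<Sum>ys\<in>walks V i. w ys * f (last ys))
     = (\<Sum>x\<in>V. \<Sum>ys\<in>walks V i. if last ys = x then w ys * f (last ys) else 0)" by (rule group)
  also have "\<dots> = (\<Sum>x\<in>V. f x * (\<Sum>ys\<in>walks V i. w ys * (if last ys = x then 1 else 0)))"
    by (simp add: sum_distrib_left if_distrib mult_ac cong: if_cong)
  also have "\<dots> = (\<Sum>x\<in>V. f x * \<mu> x)" using lastdist by simp
  finally show ?thesis .
qed

definition Ev :: "nat set set \<Rightarrow> nat \<Rightarrow> nat list \<Rightarrow> real" where
  "Ev S i xs = (if {xs!i, xs!Suc i} \<in> S then 1 else 0)"

lemma Ev_take: "i < k \<Longrightarrow> Ev S i (take (Suc k) xs) = Ev S i xs"
  unfolding Ev_def by simp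

lemma Ev_nonneg: "Ev S i xs \<ge> 0" unfolding Ev_def by simp

lemma E1:
  assumes "i < t"
  shows "(\<Sum>xs\<in>walks V t. w xs * Ev S i xs) = (\<Sum>x\<in>V. phi S x * \<mu> x)"
proof -
  define s where "s = t - Suc i"
  have t: "t = Suc i + s" using assms unfolding s_def by arith
  have "(\<Sum>xs\<in>walks V t. w xs * Ev S i xs) = (\<Sum>xs\<in>walks V (Suc i + s). w xs * Ev S i (take (Suc (Suc i)) xs))"
    using t by (simp add: Ev_take)
  also have "\<dots> = (\<Sum>ys\<in>walks V (Suc i). w ys * Ev S i ys)" by (rule prefix)
  also have "\<dots> = (\<Sum>ys\<in>walks V (Suc i). w ys * (\<lambda>_. 1) (take (Suc i) ys) * (if {ys!i, ys!Suc i} \<in> S then 1 else 0))"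
    by (simp add: Ev_def)
  also have "\<dots> = (\<Sum>ys\<in>walks V i. w ys * 1 * phi S (last ys))" by (rule laststep)
  also have "\<dots> = (\<Sum>x\<in>V. phi S x * \<mu> x)" using sumlast by simp
  finally show ?thesis .
qed

lemma E2:
  assumes "i < j" "j < t" "Suc i + T \<le> j"
    and mix: "\<And>v u. v \<in> V \<Longrightarrow> u \<in> V \<Longrightarrow> wd T v u \<le> \<mu> u + \<delta>"
  shows "(\<Sum>xs\<in>walks V t. w xs * (Ev S i xs * Ev S j xs))
     \<le> (\<Sum>x\<in>V. phi S x * \<mu> x) * (\<Sum>x\<in>V. phi S x * (\<mu> x + \<delta>))"
proof -
  define r where "r = t - Suc j"
  have t: "t = Suc j + r" using assms(2) unfolding r_def by arith
  define s where "s = j - Suc i"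
  have j: "j = Suc i + s" and sT: "T \<le> s" using assms(3) unfolding s_def by arith+
  let ?A = "(\<Sum>x\<in>V. phi S x * \<mu> x)"
  have "(\<Sum>xs\<in>walks V t. w xs * (Ev S i xs * Ev S j xs))
     = (\<Sum>xs\<in>walks V (Suc j + r). w xs * (\<lambda>ys. Ev S i ys * Ev S j ys) (take (Suc (Suc j)) xs))"
    using t assms(1) by (simp add: Ev_take)
  also have "\<dots> = (\<Sum>ys\<in>walks V (Suc j). w ys * (Ev S i ys * Ev S j ys))" by (rule prefix)
  also have "\<dots> = (\<Sum>ys\<in>walks V (Suc j). w ys * Ev S i (take (Suc j) ys) * (if {ys!j, ys!Suc j} \<in> S then 1 else 0))"
    using assms(1) by (simp add: Ev_take Ev_def mult.assoc)
  also have "\<dots> = (\<Sum>zs\<in>walks V j. w zs * Ev S i zs * phi S (last zs))" by (rule laststep)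
  also have "\<dots> = (\<Sum>x\<in>V. \<Sum>zs\<in>walks V j. if last zs = x then w zs * Ev S i zs * phi S (last zs) else 0)"
    by (rule group)
  also have "\<dots> = (\<Sum>x\<in>V. phi S x * (\<Sum>zs\<in>walks V (Suc i + s). w zs * Ev S i (take (Suc (Suc i)) zs) * (if last zs = x then 1 else 0)))"
    using j by (simp add: sum_distrib_left if_distrib mult_ac Ev_take cong: if_cong)
  also have "\<dots> = (\<Sum>x\<in>V. phi S x * (\<Sum>ys\<in>walks V (Suc i). w ys * Ev S i ys * wd s (last ys) x))"
    by (intro sum.cong refl arg_cong[where f="\<lambda>z. phi S _ * z"] markov)
  also have "\<dots> \<le> (\<Sum>x\<in>V. phi S x * (\<Sum>ys\<in>walks V (Suc i). w ys * Ev S i ys * (\<mu> x + \<delta>)))"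
  proof (rule sum_mono, rule mult_left_mono[OF _ phi_nonneg], rule sum_mono)
    fix x ys assume x: "x \<in> V" and ys: "ys \<in> walks V (Suc i)"
    have "wd s (last ys) x \<le> \<mu> x + \<delta>"
      by (rule wd_upper[OF _ sT walks_last[OF ys]]) (rule mix[OF _ x])
    then show "w ys * Ev S i ys * wd s (last ys) x \<le> w ys * Ev S i ys * (\<mu> x + \<delta>)"
      by (intro mult_left_mono mult_nonneg_nonneg w_nonneg Ev_nonneg)
  qed
  also have "\<dots> = (\<Sum>x\<in>V. phi S x * (\<mu> x + \<delta>)) * (\<Sum>ys\<in>walks V (Suc i). w ys * Ev S i ys)"
    by (simp add: sum_distrib_left sum_distrib_right mult_ac) (rule sum.swap)
  also have "(\<Sum>ys\<in>walks V (Suc i). w ys * Ev S i ys) = ?A" by (rule E1) simp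
  finally show ?thesis by (simp add: mult_ac)
qed


lemma hit_sum: "hit_prob V adj t S = (\<Sum>xs\<in>walks V t. w xs * (if traverses S xs then 1 else 0))"
proof -
  have "sum w {xs\<in>walks V t. traverses S xs} = (\<Sum>xs\<in>walks V t. if traverses S xs then w xs else 0)"
    by (rule sum.inter_filter[OF finite_walks[OF fin]])
  also have "\<dots> = (\<Sum>xs\<in>walks V t. w xs * (if traverses S xs then 1 else 0))"
    by (intro sum.cong) auto
  finally show ?thesis unfolding hit_prob_def .
qed

lemma hit_ge_first:
  assumes "0 < t"
  shows "hit_prob V adj t S \<ge> (\<Sum>x\<in>V. phi S x * \<mu> x)"
proof -
  have "(\<Sum>x\<in>V. phi S x * \<mu> x) = (\<Sum>xs\<in>walks V t. w xs * Ev S 0 xs)" using E1[OF assms] by simp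
  also have "\<dots> \<le> (\<Sum>xs\<in>walks V t. w xs * (if traverses S xs then 1 else 0))"
  proof (intro sum_mono mult_left_mono w_nonneg)
    fix xs assume "xs \<in> walks V t"
    then have "length xs = Suc t" by (simp add: walks_def)
    then show "Ev S 0 xs \<le> (if traverses S xs then 1 else 0)"
      using assms unfolding Ev_def traverses_def by auto
  qed
  finally show ?thesis using hit_sum by simp
qed

lemma hit_lower:
  assumes I: "I \<subseteq> {..<t}" and sp: "\<And>i j. i \<in> I \<Longrightarrow> j \<in> I \<Longrightarrow> i < j \<Longrightarrow> Suc i + T \<le> j"
    and mix: "\<And>v u. v \<in> V \<Longrightarrow> u \<in> V \<Longrightarrow> wd T v u \<le> \<mu> u + \<delta>"
    and dl: "0 \<le> \<delta>" and a: "a = (\<Sum>x\<in>V. phi S x * \<mu> x)" and b: "b = (\<Sum>x\<in>V. phi S x * (\<mu> x + \<delta>))"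
  shows "hit_prob V adj t S \<ge> real (card I) * a - (real (card I) * a + (real (card I))\<^sup>2 * (a * b)) / 2"
proof -
  have finI: "finite I" using I finite_subset by blast
  define N where "N xs = (\<Sum>i\<in>I. Ev S i xs)" for xs
  have pt: "N xs - (N xs)\<^sup>2 / 2 \<le> (if traverses S xs then 1 else 0)" if xs: "xs \<in> walks V t" for xs
  proof (cases "traverses S xs")
    case True
    have "0 \<le> (N xs - 1)\<^sup>2" by simp
    then show ?thesis using True by (simp add: power2_eq_square algebra_simps)
  next
    case False
    have "length xs = Suc t" using xs by (simp add: walks_def)
    then have "N xs = 0" unfolding N_def using False I
      by (intro sum.neutral) (auto simp: Ev_def traverses_def)
    then show ?thesis using False by simp
  qed
  have "(\<Sum>xs\<in>walks V t. w xs * (N xs - (N xs)\<^sup>2 / 2)) \<le> hit_prob V adj t S"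
    unfolding hit_sum by (intro sum_mono mult_left_mono w_nonneg pt)
  moreover have "(\<Sum>xs\<in>walks V t. w xs * N xs) = real (card I) * a"
  proof -
    have "(\<Sum>xs\<in>walks V t. w xs * N xs) = (\<Sum>i\<in>I. \<Sum>xs\<in>walks V t. w xs * Ev S i xs)"
      unfolding N_def by (simp add: sum_distrib_left) (rule sum.swap)
    also have "\<dots> = (\<Sum>i\<in>I. a)" using I a E1 by (intro sum.cong) auto
    finally show ?thesis by simp
  qed
  moreover have "(\<Sum>xs\<in>walks V t. w xs * (N xs)\<^sup>2) \<le> real (card I) * a + (real (card I))\<^sup>2 * (a * b)"
  proof -
    have "(\<Sum>xs\<in>walks V t. w xs * (N xs)\<^sup>2)
       = (\<Sum>i\<in>I. \<Sum>j\<in>I. \<Sum>xs\<in>walks V t. w xs * (Ev S i xs * Ev S j xs))"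
    proof -
      have "(\<Sum>xs\<in>walks V t. w xs * (N xs)\<^sup>2) = (\<Sum>xs\<in>walks V t. \<Sum>i\<in>I. \<Sum>j\<in>I. w xs * (Ev S i xs * Ev S j xs))"
      proof (rule sum.cong[OF refl])
        fix xs
        have "(N xs)\<^sup>2 = (\<Sum>i\<in>I. \<Sum>j\<in>I. Ev S i xs * Ev S j xs)"
          unfolding N_def power2_eq_square by (rule sum_product)
        then show "w xs * (N xs)\<^sup>2 = (\<Sum>i\<in>I. \<Sum>j\<in>I. w xs * (Ev S i xs * Ev S j xs))"
          by (simp add: sum_distrib_left)
      qed
      also have "\<dots> = (\<Sum>i\<in>I. \<Sum>xs\<in>walks V t. \<Sum>j\<in>I. w xs * (Ev S i xs * Ev S j xs))"
        by (rule sum.swap)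
      also have "\<dots> = (\<Sum>i\<in>I. \<Sum>j\<in>I. \<Sum>xs\<in>walks V t. w xs * (Ev S i xs * Ev S j xs))"
        by (intro sum.cong refl) (rule sum.swap)
      finally show ?thesis .
    qed
    also have "\<dots> \<le> (\<Sum>i\<in>I. a + real (card I) * (a * b))"
    proof (rule sum_mono)
      fix i assume i: "i \<in> I"
      have split: "(\<Sum>j\<in>I. \<Sum>xs\<in>walks V t. w xs * (Ev S i xs * Ev S j xs))
          = (\<Sum>xs\<in>walks V t. w xs * (Ev S i xs * Ev S i xs)) + (\<Sum>j\<in>I - {i}. \<Sum>xs\<in>walks V t. w xs * (Ev S i xs * Ev S j xs))"
        using finI i by (simp add: sum.remove)
      have d: "(\<Sum>xs\<in>walks V t. w xs * (Ev S i xs * Ev S i xs)) = a"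
      proof -
        have sq: "Ev S i xs * Ev S i xs = Ev S i xs" for xs by (simp add: Ev_def)
        have "i < t" using i I by auto
        then show ?thesis unfolding sq using E1[of i t S] a by simp
      qed
      have "(\<Sum>j\<in>I - {i}. \<Sum>xs\<in>walks V t. w xs * (Ev S i xs * Ev S j xs)) \<le> (\<Sum>j\<in>I - {i}. a * b)"
      proof (rule sum_mono)
        fix j assume j: "j \<in> I - {i}"
        show "(\<Sum>xs\<in>walks V t. w xs * (Ev S i xs * Ev S j xs)) \<le> a * b"
        proof (cases "i < j")
          case True
          then show ?thesis using E2[OF True _ sp[OF i _ True] mix, of t S] j I a b by auto
        next
          case False
          then have ji: "j < i" using j by auto
          have "(\<Sum>xs\<in>walks V t. w xs * (Ev S i xs * Ev S j xs)) = (\<Sum>xs\<in>walks V t. w xs * (Ev S j xs * Ev S i xs))"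
            by (simp add: mult.commute)
          then show ?thesis using E2[OF ji _ sp[OF _ i ji] mix, of t S] j i I a b by auto
        qed
      qed
      also have "\<dots> \<le> real (card I) * (a * b)"
      proof -
        have ab: "a * b \<ge> 0" unfolding a b
          using phi_nonneg mu_nonneg dl by (intro mult_nonneg_nonneg sum_nonneg add_nonneg_nonneg) auto
        have "(\<Sum>j\<in>I - {i}. a * b) = real (card (I - {i})) * (a * b)" by simp
        also have "\<dots> \<le> real (card I) * (a * b)"
          using ab finI by (intro mult_right_mono) (auto intro: card_mono)
        finally show ?thesis .
      qed
      finally show "(\<Sum>j\<in>I. \<Sum>xs\<in>walks V t. w xs * (Ev S i xs * Ev S j xs)) \<le> a + real (card I) * (a * b)"
        using split d by linarith
    qed
    also have "\<dots> = real (card I) * a + (real (card I))\<^sup>2 * (a * b)"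
      by (simp add: power2_eq_square algebra_simps)
    finally show ?thesis .
  qed
  moreover have "(\<Sum>xs\<in>walks V t. w xs * (N xs - (N xs)\<^sup>2 / 2))
     = (\<Sum>xs\<in>walks V t. w xs * N xs) - (\<Sum>xs\<in>walks V t. w xs * (N xs)\<^sup>2) / 2"
    by (simp add: right_diff_distrib sum_subtractf sum_divide_distrib)
  ultimately have "real (card I) * a - (\<Sum>xs\<in>walks V t. w xs * (N xs)\<^sup>2) / 2 \<le> hit_prob V adj t S"
    and "(\<Sum>xs\<in>walks V t. w xs * (N xs)\<^sup>2) \<le> real (card I) * a + (real (card I))\<^sup>2 * (a * b)"
    by linarith+
  then show ?thesis by (smt (verit) divide_right_mono zero_le_numeral)
qed


lemma edges_sub: "edges V adj \<subseteq> (\<lambda>(u,v). {u,v}) ` (V \<times> V)"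
  unfolding edges_def by auto

lemma finite_edges: "finite (edges V adj)"
  using finite_subset[OF edges_sub] fin by auto

lemma card_edges: "card (edges V adj) \<le> card V ^ 2"
proof -
  have "card (edges V adj) \<le> card ((\<lambda>(u,v). {u,v}) ` (V \<times> V))"
    using fin by (intro card_mono edges_sub) auto
  also have "\<dots> \<le> card (V \<times> V)" by (rule card_image_le) (use fin in auto)
  finally show ?thesis by (simp add: card_cartesian_product power2_eq_square)
qed

lemma handshake:
  assumes S: "S \<subseteq> edges V adj"
  shows "(\<Sum>x\<in>V. card {y\<in>V. adj x y \<and> {x,y} \<in> S}) = 2 * card S"
proof -
  define Q where "Q = (SIGMA x:V. {y\<in>V. adj x y \<and> {x,y} \<in> S})"
  have finS: "finite S" using S finite_edges finite_subset by blast
  have "(\<Sum>x\<in>V. card {y\<in>V. adj x y \<and> {x,y} \<in> S}) = card Q"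
    unfolding Q_def using fin by (subst card_SigmaI) auto
  also have "Q = (\<Union>e\<in>S. {p. {fst p, snd p} = e})"
  proof (intro equalityI subsetI)
    fix p assume "p \<in> Q" then show "p \<in> (\<Union>e\<in>S. {p. {fst p, snd p} = e})"
      unfolding Q_def by auto
  next
    fix p assume "p \<in> (\<Union>e\<in>S. {p. {fst p, snd p} = e})"
    then have pS: "{fst p, snd p} \<in> S" by auto
    then obtain u v where uv: "{fst p, snd p} = {u,v}" "u \<in> V" "v \<in> V" "adj u v"
      using S unfolding edges_def by blast
    then have "(fst p = u \<and> snd p = v) \<or> (fst p = v \<and> snd p = u)" by (auto simp: doubleton_eq_iff)
    then have "adj (fst p) (snd p)" "fst p \<in> V" "snd p \<in> V" using uv adjV by auto
    then show "p \<in> Q" unfolding Q_def using pS by (cases p) auto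
  qed
  also have "card (\<Union>e\<in>S. {p. {fst p, snd p} = e}) = (\<Sum>e\<in>S. card {p. {fst p, snd p} = e})"
  proof (rule card_UN_disjoint[OF finS])
    show "\<forall>e\<in>S. finite {p. {fst p, snd p} = e}"
    proof
      fix e assume "e \<in> S"
      then obtain u v where "e = {u,v}" using S unfolding edges_def by blast
      then have "{p. {fst p, snd p} = e} \<subseteq> {(u,v),(v,u)}" by (auto simp: doubleton_eq_iff)
      then show "finite {p. {fst p, snd p} = e}" using finite_subset by blast
    qed
  qed auto
  also have "\<dots> = (\<Sum>e\<in>S. 2)"
  proof (rule sum.cong[OF refl])
    fix e assume "e \<in> S"
    then obtain u v where uv: "e = {u,v}" "adj u v" using S unfolding edges_def by blast
    then have "u \<noteq> v" using adjV by blast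
    have "{p. {fst p, snd p} = e} = {(u,v),(v,u)}" using uv by (auto simp: doubleton_eq_iff)
    then show "card {p. {fst p, snd p} = e} = 2" using \<open>u \<noteq> v\<close> by simp
  qed
  finally show ?thesis by simp
qed

lemma phi_eq: assumes "x \<in> V"
  shows "phi S x = real (card {y\<in>V. adj x y \<and> {x,y} \<in> S}) / real (degree V adj x)"
proof -
  have "phi S x = (\<Sum>y\<in>V. if adj x y \<and> {x,y} \<in> S then 1 / real (degree V adj x) else 0)"
    unfolding phi_def trans_prob_def by (intro sum.cong) auto
  also have "\<dots> = (\<Sum>y\<in>{y\<in>V. adj x y \<and> {x,y} \<in> S}. 1 / real (degree V adj x))"
    by (rule sum.inter_filter[OF fin, symmetric])
  finally show ?thesis by simp
qed

lemma a_eq: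
  assumes S: "S \<subseteq> edges V adj"
  shows "(\<Sum>x\<in>V. phi S x * \<mu> x) = real (card S) / real (card (edges V adj))"
proof -
  have "(\<Sum>x\<in>V. phi S x * \<mu> x) = (\<Sum>x\<in>V. real (card {y\<in>V. adj x y \<and> {x,y} \<in> S}) / (2 * real (card (edges V adj))))"
    using degpos by (intro sum.cong) (auto simp: phi_eq stat_dist_def)
  also have "\<dots> = real (\<Sum>x\<in>V. card {y\<in>V. adj x y \<and> {x,y} \<in> S}) / (2 * real (card (edges V adj)))"
    by (simp add: sum_divide_distrib)
  also have "\<dots> = real (card S) / real (card (edges V adj))" using handshake[OF S] by simp
  finally show ?thesis .
qed

lemma phi_sum:
  assumes S: "S \<subseteq> edges V adj"
  shows "(\<Sum>x\<in>V. phi S x) \<le> 2 * real (card S)"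
proof -
  have "(\<Sum>x\<in>V. phi S x) \<le> (\<Sum>x\<in>V. real (card {y\<in>V. adj x y \<and> {x,y} \<in> S}))"
  proof (rule sum_mono)
    fix x assume x: "x \<in> V"
    have "1 \<le> real (degree V adj x)" using degpos[OF x] by simp
    then show "phi S x \<le> real (card {y\<in>V. adj x y \<and> {x,y} \<in> S})"
    proof -
      let ?c = "real (card {y\<in>V. adj x y \<and> {x,y} \<in> S})"
      have "?c * 1 \<le> ?c * real (degree V adj x)" using \<open>1 \<le> real (degree V adj x)\<close>
        by (intro mult_left_mono) auto
      then show ?thesis unfolding phi_eq[OF x] using \<open>1 \<le> real (degree V adj x)\<close>
        by (simp add: divide_le_eq mult.commute)
    qed
  qed
  also have "\<dots> = 2 * real (card S)" using handshake[OF S] by (simp flip: of_nat_sum)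
  finally show ?thesis .
qed

end


lemma div_le_self_real: "0 \<le> (x::real) \<Longrightarrow> 1 \<le> y \<Longrightarrow> x / y \<le> x"
  using mult_left_mono[of 1 y x] by (simp add: divide_le_eq)

theorem lemma2:
  fixes c T0 C :: real
  assumes "c \<ge> 1"
  shows "\<exists>c0 > 0. \<exists>D0::nat. \<forall>V adj D T t S.
    ugraph V adj \<and> connected_graph V adj \<and> uniform_graph V adj D c \<and> D \<ge> D0 \<and>
    is_mixing_time V adj (1 / (2 * c * real (card V))\<^sup>2) T \<and> real T \<le> T0 \<and>
    S \<subseteq> edges V adj \<and> real t * real (card S) \<le> C * real (card (edges V adj))
    \<longrightarrow> hit_prob V adj t S \<ge>
          c0 * (real t * real (card S)) / (real T * real (card (edges V adj)))"
proof -
  define c0 :: real where "c0 = 1 / (32 * (\<bar>C\<bar> + 1))"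
  have c0pos: "c0 > 0" unfolding c0_def by (simp add: add_pos_nonneg)
  have c0C: "c0 * \<bar>C\<bar> \<le> 1/32" unfolding c0_def by (simp add: field_simps)
  have c0le: "c0 \<le> 1/32" unfolding c0_def by (simp add: field_simps)
  show ?thesis
  proof (intro exI[of _ c0] conjI c0pos exI[of _ "1::nat"] allI impI)
    fix V adj D T t S
    assume H: "ugraph V adj \<and> connected_graph V adj \<and> uniform_graph V adj D c \<and> D \<ge> 1 \<and>
      is_mixing_time V adj (1 / (2 * c * real (card V))\<^sup>2) T \<and> real T \<le> T0 \<and>
      S \<subseteq> edges V adj \<and> real t * real (card S) \<le> C * real (card (edges V adj))"
    have ug: "ugraph V adj" and un: "uniform_graph V adj D c" and D1: "D \<ge> 1"
      and mt: "is_mixing_time V adj (1 / (2 * c * real (card V))\<^sup>2) T"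
      and S: "S \<subseteq> edges V adj" and tC: "real t * real (card S) \<le> C * real (card (edges V adj))"
      using H by auto
    interpret wg V adj
    proof
      show "finite V" using ug by (simp add: ugraph_def)
      show "\<And>u v. adj u v \<Longrightarrow> u \<in> V \<and> v \<in> V \<and> u \<noteq> v \<and> adj v u" using ug by (simp add: ugraph_def)
      show "\<And>v. v \<in> V \<Longrightarrow> degree V adj v > 0" using un D1 unfolding uniform_graph_def by fastforce
    qed
    let ?k = "card S" and ?E = "card (edges V adj)" and ?n = "card V"
    define \<delta> where "\<delta> = 1 / (2 * c * real ?n)\<^sup>2"
    have hit0: "hit_prob V adj t S \<ge> 0"
      unfolding hit_prob_def by (intro sum_nonneg w_nonneg)
    show "hit_prob V adj t S \<ge> c0 * (real t * real ?k) / (real T * real ?E)"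
    proof (cases "?k = 0 \<or> t = 0 \<or> T = 0")
      case True
      then show ?thesis using hit0 by auto
    next
      case False
      then have k1: "?k \<ge> 1" and t1: "t \<ge> 1" and T1: "T \<ge> 1" by auto
      have "?k \<le> ?E" using S finite_edges by (rule card_mono[rotated])
      then have E1: "?E \<ge> 1" using k1 by simp
      define a where "a = real ?k / real ?E"
      have apos: "a > 0" unfolding a_def using k1 E1 by simp
      have aeq: "(\<Sum>x\<in>V. phi S x * \<mu> x) = a" unfolding a_def by (rule a_eq[OF S])
      have rhs: "c0 * (real t * real ?k) / (real T * real ?E) = c0 * (real t * a) / real T"
        unfolding a_def using E1 by (simp add: field_simps)
      have ta: "real t * a \<le> \<bar>C\<bar>"
      proof -
        have "real t * a = real t * real ?k / real ?E" unfolding a_def by simp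
        also have "\<dots> \<le> C" using tC E1 by (simp add: divide_le_eq)
        finally show ?thesis by simp
      qed
      have rhs1: "c0 * (real t * a) / real T \<le> 1/32"
      proof -
        have "c0 * (real t * a) / real T \<le> c0 * (real t * a)"
          using T1 c0pos apos by (intro div_le_self_real) auto
        also have "\<dots> \<le> c0 * \<bar>C\<bar>" using ta c0pos by (intro mult_left_mono) auto
        finally show ?thesis using c0C by linarith
      qed
      have dnn: "\<delta> \<ge> 0" unfolding \<delta>_def by simp
      have mix: "\<And>v u. v \<in> V \<Longrightarrow> u \<in> V \<Longrightarrow> wd T v u \<le> \<mu> u + \<delta>"
        using mt unfolding is_mixing_time_def mixed_at_def \<delta>_def by (force simp: abs_le_iff)
      define b where "b = (\<Sum>x\<in>V. phi S x * (\<mu> x + \<delta>))"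
      have beq: "b = a + \<delta> * (\<Sum>x\<in>V. phi S x)"
        unfolding b_def aeq[symmetric] by (simp add: distrib_left sum.distrib sum_distrib_left mult.commute)
      have Vne: "V \<noteq> {}" using ug by (simp add: ugraph_def)
      have n1: "?n \<ge> 1" using Vne fin by (simp add: Suc_le_eq card_gt_0_iff)
      have n2: "real ?E \<le> (real ?n)^2" using card_edges by (metis of_nat_le_iff of_nat_power)
      have c2: "c^2 \<ge> 1" using assms by (simp add: one_le_power)
      have "4 * real ?E \<le> 4 * (1 * (real ?n)^2)" using n2 by simp
      also have "\<dots> \<le> 4 * (c^2 * (real ?n)^2)" using c2 by (intro mult_left_mono mult_right_mono) auto
      also have "\<dots> = (2 * c * real ?n)^2" by (simp add: power_mult_distrib)
      finally have X: "4 * real ?E \<le> (2 * c * real ?n)^2" .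
      have dE: "\<delta> \<le> 1 / (4 * real ?E)" unfolding \<delta>_def
        using X E1 by (intro frac_le) auto
      have "\<delta> * (\<Sum>x\<in>V. phi S x) \<le> \<delta> * (2 * real ?k)"
        using phi_sum[OF S] dnn by (intro mult_left_mono)
      also have "\<dots> \<le> 1 / (4 * real ?E) * (2 * real ?k)" using dE by (intro mult_right_mono) auto
      also have "\<dots> = a / 2" unfolding a_def by simp
      finally have "b \<le> 3/2 * a" unfolding beq by simp
      then have "a * b \<le> a * (3/2 * a)" using apos by (intro mult_left_mono) auto
      then have ab: "a * b \<le> 2 * a^2" using apos by (simp add: power2_eq_square)
      have hl: "hit_prob V adj t S \<ge> c0 * (real t * a) / real T"
      proof (cases "a > 1/4")
        case True
        have "hit_prob V adj t S \<ge> a" using hit_ge_first[of t S] t1 aeq by simp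
        then show ?thesis using rhs1 True by linarith
      next
        case False
        define x where "x = 1 / (4 * a)"
        have x1: "x \<ge> 1" unfolding x_def using False apos by (simp add: field_simps)
        define K where "K = nat \<lfloor>x\<rfloor>"
        have fl1: "\<lfloor>x\<rfloor> \<ge> 1" using x1 by simp
        have Kr: "real K = of_int \<lfloor>x\<rfloor>" unfolding K_def using fl1 by simp
        have Kx: "real K \<le> x" unfolding Kr by (rule of_int_floor_le)
        have Kx2: "real K \<ge> x / 2"
        proof -
          have "x - 1 < of_int \<lfloor>x\<rfloor>" by (rule real_of_int_floor_gt_diff_one)
          moreover have "(1::real) \<le> of_int \<lfloor>x\<rfloor>" using fl1 by simp
          ultimately show ?thesis unfolding Kr by linarith
        qed
        have Ka: "real K * a \<le> 1/4"
        proof -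
          have "real K * a \<le> x * a" using Kx apos by (intro mult_right_mono) auto
          also have "x * a = 1/4" unfolding x_def using apos by simp
          finally show ?thesis .
        qed
        have Ka2: "real K * a \<ge> 1/8"
        proof -
          have "x / 2 * a \<le> real K * a" using Kx2 apos by (intro mult_right_mono) auto
          moreover have "x / 2 * a = 1/8" unfolding x_def using apos by simp
          ultimately show ?thesis by linarith
        qed
        define L where "L = Suc T"
        define M where "M = (t + T) div L"
        have dm: "M * L + (t + T) mod L = t + T" unfolding M_def by (rule div_mult_mod_eq)
        have mL: "(t + T) mod L < L" unfolding L_def by (rule mod_less_divisor) simp
        have ML1: "M * L \<le> t + T" using dm by linarith
        have ML2: "t \<le> M * L" using dm mL unfolding L_def by linarith
        define m where "m = min M K"
        define I where "I = (\<lambda>r. r * L) ` {..<m}"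
        have L0: "L > 0" unfolding L_def by simp
        have cardI: "card I = m" unfolding I_def using L0
          by (subst card_image) (auto simp: inj_on_def)
        have Isub: "I \<subseteq> {..<t}"
        proof
          fix i assume "i \<in> I"
          then obtain r where r: "r < m" "i = r * L" unfolding I_def by auto
          then have "Suc r \<le> M" unfolding m_def by simp
          then have "Suc r * L \<le> M * L" by (rule mult_le_mono1)
          then show "i \<in> {..<t}" using r ML1 unfolding L_def by simp
        qed
        have sp: "Suc i + T \<le> j" if iI: "i \<in> I" and jI: "j \<in> I" and ij: "i < j" for i j
        proof -
          obtain r r' where rr: "i = r * L" "j = r' * L" using iI jI unfolding I_def by auto
          then have "r < r'" using ij by (metis mult_less_cancel2)
          then have "Suc r * L \<le> r' * L" by (intro mult_le_mono1) simp
          then show ?thesis using rr unfolding L_def by simp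
        qed
        have HL: "hit_prob V adj t S \<ge> real (card I) * a - (real (card I) * a + (real (card I))\<^sup>2 * (a * b)) / 2"
          by (rule hit_lower[OF Isub sp mix dnn aeq[symmetric] b_def])
        define y where "y = real m * a"
        have y0: "y \<ge> 0" unfolding y_def using apos by simp
        have y4: "y \<le> 1/4"
        proof -
          have "y \<le> real K * a" unfolding y_def m_def using apos by (intro mult_right_mono) auto
          then show ?thesis using Ka by linarith
        qed
        have "(real m)\<^sup>2 * (a * b) \<le> (real m)\<^sup>2 * (2 * a^2)" using ab by (intro mult_left_mono) auto
        also have "\<dots> = 2 * y * y" unfolding y_def by (simp add: power2_eq_square)
        also have "\<dots> \<le> 2 * y * (1/4)" using y0 y4 by (intro mult_left_mono) auto
        finally have sq: "(real m)\<^sup>2 * (a * b) \<le> y / 2" by simp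
        have hy: "hit_prob V adj t S \<ge> y / 4"
        proof -
          obtain z where z: "z = (real m)\<^sup>2 * (a * b)" by simp
          have "y - (y + z) / 2 \<le> hit_prob V adj t S" "z \<le> y / 2"
            using HL sq unfolding cardI y_def[symmetric] z[symmetric] by auto
          then show ?thesis by argo
        qed
        show ?thesis
        proof (cases "m = M")
          case True
          have "real t \<le> real M * real L" using ML2 by (metis of_nat_le_iff of_nat_mult)
          also have "\<dots> \<le> real M * (2 * real T)" using T1 unfolding L_def by (intro mult_left_mono) auto
          finally have "real t / (2 * real T) \<le> real M" using T1 by (simp add: divide_le_eq mult.commute)
          then have "real t / (2 * real T) * a \<le> y" unfolding y_def True using apos by (intro mult_right_mono) auto
          moreover have "c0 * (real t * a) / real T \<le> real t / (2 * real T) * a / 4"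
          proof -
            have "c0 * (real t * a) / real T \<le> 1/8 * (real t * a) / real T"
              using c0le T1 apos by (intro divide_right_mono mult_right_mono) auto
            also have "\<dots> = real t / (2 * real T) * a / 4" by simp
            finally show ?thesis .
          qed
          ultimately show ?thesis using hy by argo
        next
          case False
          then have "m = K" unfolding m_def by auto
          then have "y \<ge> 1/8" unfolding y_def using Ka2 by simp
          then show ?thesis using hy rhs1 by argo
        qed
      qed
      show ?thesis unfolding rhs by (rule hl)
    qed
  qed
qed

end
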